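(* Let $\mathcal{C}$ be a concept class over $\{\pm1\}^n$, $\mathcal{D}$ a class of distributions over $\{\pm1\}^n$ closed under restrictions, $D^\star$ a distribution that has a depth-$d$ decomposition into distributions in $\mathcal{D}$, and $A$ a base learner using $m$ samples that learns $\mathcal{C}$ to expected error $\le \varepsilon$ under any distribution $D \in \mathcal{D}$. Then for any $f \in \mathcal{C}$ and \[ m_{\mathrm{train}} := O\left(\frac{2^d m}{\varepsilon}\right), \qquad m_{\mathrm{test}} := O\left(\frac{2^d \ln n}{\varepsilon^2}\right), \] if $S_{\mathrm{train}}$ and $S_{\mathrm{test}}$ consist of $m_{\mathrm{train}}$ and $m_{\mathrm{test}}$ i.i.d. examples from $D^\star_f$ respectively, then $\mathrm{TreeLearn}_A(S_{\mathrm{train}}, S_{\mathrm{test}}, d)$ returns a hypothesis $H$ satisfying $\mathbb{E}[\mathrm{error}(H, D^\star_f)] \le 4\varepsilon$.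
   Context: A restriction is $\rho \in \{\pm1,\star\}^n$; $x\in\rho$ means $x_i=\rho_i$ or $\rho_i=\star$ for all $i$; depth of $\rho$ = number of non-$\star$ coordinates. $D_\rho$ is $D$ conditioned on $x\in\rho$; for a labeled set $S$, $S_\rho=\{(x,y)\in S: x\in\rho\}$. $\mathcal{D}$ is closed under restrictions if $D\in\mathcal{D}$ implies $D_\rho\in\mathcal{D}$ for all $\rho$. $D_f$ is the distribution of $(x,f(x))$, $x\sim D$. $\mathrm{error}(h,P)=\Pr_{(x,y)\sim P}[h(x)\ne y]$ and $\mathrm{error}(h,S)$ is the fraction of $(x,y)\in S$ with $h(x)\neq y$. $A$ learns $\mathcal{C}$ to expected error $\varepsilon$ under $D$ using $m$ samples if for all $f\in\mathcal{C}$, given $m$ i.i.d. samples from $D_f$, its output $h$ has $\mathbb{E}[\mathrm{error}(h,D_f)]\le\varepsilon$. A depth-$d$ decision tree is a set of $2^d$ leaf restrictions defined recursively: depth $0$ is the single all-$\star$ restriction; depth $d\ge1$ has a root coordinate $i$ and two depth-$(d-1)$ trees not fixing $i$, whose leaves get coordinate $i$ set to $-1$ and $+1$ respectively. $D^\star$ has a depth-$d$ decomposition into $\mathcal{D}$ if some depth-$d$ tree $T$ has $(D^\star)_\ell\in\mathcal{D}$ for every leaf $\ell$. For a tree $T$ and map $\mathcal{H}$ from restrictions to hypotheses, $T\circ\mathcal{H}(x)=\mathcal{H}(\ell)(x)$ for the leaf $\ell\ni x$. Algorithm $\mathrm{TreeLearn}_A(S_{\mathrm{train}},S_{\mathrm{test}},d)$: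 for every depth-$d$ restriction $\rho$ set $h_\rho\leftarrow A((S_{\mathrm{train}})_\rho)$ (i.e., $A$ is run on whatever examples of $S_{\mathrm{train}}$ lie in $\rho$), let $\mathcal{H}(\rho)=h_\rho$, then find a depth-$d$ decision tree $T$ minimizing $\mathrm{error}(T\circ\mathcal{H},S_{\mathrm{test}})$ and return $T\circ\mathcal{H}$. Expectations are over the samples and the randomness of $A$. *)

theory Defs
  imports "HOL-Probability.Probability"
begin

text \<open>Points of the cube: bool lists of length n (True = +1, False = -1).
  Labels: bool (True = +1). Restrictions: bool option lists of length n
  (None = star).\<close>

type_synonym point = "bool list"
type_synonym restr = "bool option list"
type_synonym hyp = "point \<Rightarrow> bool"
type_synonym sample = "(point \<times> bool) list"

definition cube :: "nat \<Rightarrow> point set" where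
  "cube n = {x. length x = n}"

definition restrs :: "nat \<Rightarrow> restr set" where
  "restrs n = {\<rho>. length \<rho> = n}"

definition in_restr :: "point \<Rightarrow> restr \<Rightarrow> bool" where
  "in_restr x \<rho> \<longleftrightarrow> list_all2 (\<lambda>a r. r = None \<or> r = Some a) x \<rho>"

definition restr_set :: "restr \<Rightarrow> point set" where
  "restr_set \<rho> = {x. in_restr x \<rho>}"

definition restr_depth :: "restr \<Rightarrow> nat" where
  "restr_depth \<rho> = length (filter (\<lambda>r. r \<noteq> None) \<rho>)"

definition depth_restrs :: "nat \<Rightarrow> nat \<Rightarrow> restr set" where
  "depth_restrs n d = {\<rho> \<in> restrs n. restr_depth \<rho> = d}"

text \<open>D conditioned on x in rho (defined when rho has positive mass).\<close>
definition restrict_dist :: "point pmf \<Rightarrow> restr \<Rightarrow> point pmf" where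
  "restrict_dist D \<rho> = cond_pmf D (restr_set \<rho>)"

definition restrict_sample :: "restr \<Rightarrow> sample \<Rightarrow> sample" where
  "restrict_sample \<rho> S = filter (\<lambda>(x, y). in_restr x \<rho>) S"

definition closed_under_restrictions :: "nat \<Rightarrow> point pmf set \<Rightarrow> bool" where
  "closed_under_restrictions n \<D> \<longleftrightarrow>
     (\<forall>D\<in>\<D>. \<forall>\<rho>\<in>restrs n. set_pmf D \<inter> restr_set \<rho> \<noteq> {} \<longrightarrow> restrict_dist D \<rho> \<in> \<D>)"

text \<open>Depth-d decision trees over n coordinates, as sets of leaf restrictions.\<close>
inductive dtree :: "nat \<Rightarrow> nat \<Rightarrow> restr set \<Rightarrow> bool" for n :: nat where
  leaf: "dtree n 0 {replicate n None}"
| node: "\<lbrakk> i < n; dtree n d T0; dtree n d T1; \<forall>\<rho>\<in>T0 \<union> T1. \<rho> ! i = None \<rbrakk> \<Longrightarrow>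
     dtree n (Suc d) ((\<lambda>\<rho>. \<rho>[i := Some False]) ` T0 \<union> (\<lambda>\<rho>. \<rho>[i := Some True]) ` T1)"

definition has_decomposition :: "nat \<Rightarrow> point pmf set \<Rightarrow> point pmf \<Rightarrow> nat \<Rightarrow> bool" where
  "has_decomposition n \<D> Dstar d \<longleftrightarrow>
     (\<exists>T. dtree n d T \<and>
        (\<forall>l\<in>T. set_pmf Dstar \<inter> restr_set l \<noteq> {} \<longrightarrow> restrict_dist Dstar l \<in> \<D>))"

definition labeled :: "point pmf \<Rightarrow> hyp \<Rightarrow> (point \<times> bool) pmf" where
  "labeled D f = map_pmf (\<lambda>x. (x, f x)) D"

definition error :: "hyp \<Rightarrow> (point \<times> bool) pmf \<Rightarrow> real" where
  "error h P = measure_pmf.prob P {(x, y). h x \<noteq> y}"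

definition sample_error :: "hyp \<Rightarrow> sample \<Rightarrow> real" where
  "sample_error h S = real (length (filter (\<lambda>(x, y). h x \<noteq> y) S)) / real (length S)"

type_synonym learner = "sample \<Rightarrow> hyp pmf"

definition uses_samples :: "learner \<Rightarrow> nat \<Rightarrow> bool" where
  "uses_samples A m \<longleftrightarrow> (\<forall>S. m \<le> length S \<longrightarrow> A S = A (take m S))"

definition learns :: "hyp set \<Rightarrow> point pmf \<Rightarrow> learner \<Rightarrow> nat \<Rightarrow> real \<Rightarrow> bool" where
  "learns C D A m \<epsilon> \<longleftrightarrow>
     (\<forall>f\<in>C. measure_pmf.expectation (replicate_pmf m (labeled D f) \<bind> A)
                (\<lambda>h. error h (labeled D f)) \<le> \<epsilon>)"

definition tree_eval :: "restr set \<Rightarrow> (restr \<Rightarrow> hyp) \<Rightarrow> hyp" where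
  "tree_eval T H x = H (THE l. l \<in> T \<and> in_restr x l) x"

definition best_tree :: "nat \<Rightarrow> nat \<Rightarrow> (restr \<Rightarrow> hyp) \<Rightarrow> sample \<Rightarrow> restr set" where
  "best_tree n d H S = (SOME T. dtree n d T \<and>
     (\<forall>T'. dtree n d T' \<longrightarrow> sample_error (tree_eval T H) S \<le> sample_error (tree_eval T' H) S))"

definition tree_learn :: "nat \<Rightarrow> learner \<Rightarrow> sample \<Rightarrow> sample \<Rightarrow> nat \<Rightarrow> hyp pmf" where
  "tree_learn n A Strain Stest d =
     Pi_pmf (depth_restrs n d) (\<lambda>_. False) (\<lambda>\<rho>. A (restrict_sample \<rho> Strain)) \<bind>
       (\<lambda>H. return_pmf (tree_eval (best_tree n d H Stest) H))"

end

theory Submission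
  imports Defs "HOL-Probability.Hoeffding"
begin

lemma in_restr_iff:
  "in_restr x \<rho> \<longleftrightarrow> length x = length \<rho> \<and> (\<forall>j<length \<rho>. \<rho>!j = None \<or> \<rho>!j = Some (x!j))"
  unfolding in_restr_def list_all2_conv_all_nth by auto

lemma in_restr_upd:
  assumes "i < length \<rho>" "\<rho>!i = None"
  shows "in_restr x (\<rho>[i := Some b]) \<longleftrightarrow> in_restr x \<rho> \<and> x!i = b"
  using assms unfolding in_restr_iff
  by (auto simp: nth_list_update split: if_splits)

lemma restr_depth_upd:
  assumes "i < length \<rho>" "\<rho>!i = None"
  shows "restr_depth (\<rho>[i := Some b]) = Suc (restr_depth \<rho>)"
  using assms unfolding restr_depth_def
proof (induction \<rho> arbitrary: i)
  case Nil then show ?case by simp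
next
  case (Cons a \<rho>)
  then show ?case by (cases i) auto
qed

lemma dtree_leaves:
  assumes "dtree n d T"
  shows "finite T \<and> card T \<le> 2^d \<and> (\<forall>l\<in>T. length l = n \<and> restr_depth l = d)"
  using assms
proof (induction d T rule: dtree.induct)
  case leaf
  then show ?case by (simp add: restr_depth_def)
next
  case (node i d T0 T1)
  have "card ((\<lambda>\<rho>. \<rho>[i := Some False]) ` T0 \<union> (\<lambda>\<rho>. \<rho>[i := Some True]) ` T1)
        \<le> card ((\<lambda>\<rho>. \<rho>[i := Some False]) ` T0) + card ((\<lambda>\<rho>. \<rho>[i := Some True]) ` T1)"
    by (rule card_Un_le)
  also have "\<dots> \<le> card T0 + card T1" by (intro add_mono card_image_le) (use node in auto)
  finally show ?case using node by (auto simp: restr_depth_upd)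
qed

lemma dtree_partition:
  assumes "dtree n d T" "length x = n"
  shows "\<exists>!l. l \<in> T \<and> in_restr x l"
  using assms
proof (induction d T arbitrary: x rule: dtree.induct)
  case leaf
  then show ?case by (auto simp: in_restr_iff)
next
  case (node i d T0 T1)
  have L0: "\<forall>l\<in>T0. length l = n" and L1: "\<forall>l\<in>T1. length l = n"
    using dtree_leaves[OF node.hyps(2)] dtree_leaves[OF node.hyps(3)] by auto
  show ?case
  proof (cases "x!i")
    case True
    obtain \<rho> where \<rho>: "\<rho> \<in> T1" "in_restr x \<rho>" using node.IH(2)[OF node.prems] by auto
    show ?thesis
    proof (rule ex1I[where a="\<rho>[i := Some True]"])
      show "\<rho>[i := Some True] \<in> (\<lambda>\<rho>. \<rho>[i := Some False]) ` T0 \<union> (\<lambda>\<rho>. \<rho>[i := Some True]) ` T1 \<and>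
            in_restr x (\<rho>[i := Some True])"
        using \<rho> True node L1 by (auto simp: in_restr_upd)
    next
      fix l assume l: "l \<in> (\<lambda>\<rho>. \<rho>[i := Some False]) ` T0 \<union> (\<lambda>\<rho>. \<rho>[i := Some True]) ` T1 \<and> in_restr x l"
      then consider (a) \<sigma> where "\<sigma> \<in> T0" "l = \<sigma>[i := Some False]" | (b) \<sigma> where "\<sigma> \<in> T1" "l = \<sigma>[i := Some True]"
        by auto
      then show "l = \<rho>[i := Some True]"
      proof cases
        case a then show ?thesis using l True node L0 by (auto simp: in_restr_upd)
      next
        case b
        then have "in_restr x \<sigma>" using l node L1 by (auto simp: in_restr_upd)
        then have "\<sigma> = \<rho>" using node.IH(2)[OF node.prems] \<rho> b by auto
        then show ?thesis using b by simp
      qed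
    qed
  next
    case False
    obtain \<rho> where \<rho>: "\<rho> \<in> T0" "in_restr x \<rho>" using node.IH(1)[OF node.prems] by auto
    show ?thesis
    proof (rule ex1I[where a="\<rho>[i := Some False]"])
      show "\<rho>[i := Some False] \<in> (\<lambda>\<rho>. \<rho>[i := Some False]) ` T0 \<union> (\<lambda>\<rho>. \<rho>[i := Some True]) ` T1 \<and>
            in_restr x (\<rho>[i := Some False])"
        using \<rho> False node L0 by (auto simp: in_restr_upd)
    next
      fix l assume l: "l \<in> (\<lambda>\<rho>. \<rho>[i := Some False]) ` T0 \<union> (\<lambda>\<rho>. \<rho>[i := Some True]) ` T1 \<and> in_restr x l"
      then consider (a) \<sigma> where "\<sigma> \<in> T0" "l = \<sigma>[i := Some False]" | (b) \<sigma> where "\<sigma> \<in> T1" "l = \<sigma>[i := Some True]"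
        by auto
      then show "l = \<rho>[i := Some False]"
      proof cases
        case b then show ?thesis using l False node L1 by (auto simp: in_restr_upd)
      next
        case a
        then have "in_restr x \<sigma>" using l node L0 by (auto simp: in_restr_upd)
        then have "\<sigma> = \<rho>" using node.IH(1)[OF node.prems] \<rho> a by auto
        then show ?thesis using a by simp
      qed
    qed
  qed
qed

lemma dtree_count:
  "finite {T. dtree n d T} \<and> card {T. dtree n d T} \<le> n ^ (2^d - 1)"
proof (induction d)
  case 0
  have "{T. dtree n 0 T} = {{replicate n None}}"
    by (auto elim: dtree.cases intro: dtree.intros)
  then show ?case by simp
next
  case (Suc d)
  let ?F = "\<lambda>(i, T0, T1). (\<lambda>\<rho>. \<rho>[i := Some False]) ` T0 \<union> (\<lambda>\<rho>. (\<rho>::restr)[i := Some True]) ` T1"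
  have sub: "{T. dtree n (Suc d) T} \<subseteq> ?F ` ({..<n} \<times> {T. dtree n d T} \<times> {T. dtree n d T})"
  proof
    fix T assume "T \<in> {T. dtree n (Suc d) T}"
    then obtain i T0 T1 where "i < n" "dtree n d T0" "dtree n d T1"
      "T = (\<lambda>\<rho>. \<rho>[i := Some False]) ` T0 \<union> (\<lambda>\<rho>. \<rho>[i := Some True]) ` T1"
      by (auto elim: dtree.cases)
    then show "T \<in> ?F ` ({..<n} \<times> {T. dtree n d T} \<times> {T. dtree n d T})"
      by (intro image_eqI[where x="(i, T0, T1)"]) auto
  qed
  have fin: "finite ({..<n} \<times> {T. dtree n d T} \<times> {T. dtree n d T})" using Suc by auto
  have "card {T. dtree n (Suc d) T} \<le> card (?F ` ({..<n} \<times> {T. dtree n d T} \<times> {T. dtree n d T}))"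
    by (rule card_mono[OF finite_imageI[OF fin] sub])
  also have "\<dots> \<le> card ({..<n} \<times> {T. dtree n d T} \<times> {T. dtree n d T})"
    by (rule card_image_le[OF fin])
  also have "\<dots> = n * (card {T. dtree n d T})^2" by (simp add: card_cartesian_product power2_eq_square)
  also have "\<dots> \<le> n * (n ^ (2^d - 1))^2" using Suc by (intro mult_left_mono power_mono) auto
  also have "\<dots> = n ^ (2^Suc d - 1)"
  proof -
    have "(2::nat)^Suc d - 1 = 1 + 2 * (2^d - 1)"
    proof -
      have "(1::nat) \<le> 2^d" by simp
      then obtain k where "(2::nat)^d = Suc k" by (metis Suc_le_D Suc_le_eq zero_less_iff_neq_zero le_numeral_extra(4) not_one_le_zero)
      then show ?thesis by simp
    qed
    then show ?thesis by (simp add: power_mult power_add mult.commute power_mult_distrib flip: power_mult)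
  qed
  finally show ?case using finite_subset[OF sub finite_imageI[OF fin]] by simp
qed

lemma pmf_integrable_bounded:
  fixes h :: "'a \<Rightarrow> real"
  assumes "\<And>y. y \<in> set_pmf p \<Longrightarrow> \<bar>h y\<bar> \<le> B"
  shows "integrable (measure_pmf p) h"
  apply (rule measure_pmf.integrable_const_bound[where B=B])
  using assms by (auto simp: AE_measure_pmf_iff)

lemma exp_bind_pmf:
  fixes h :: "'b \<Rightarrow> real"
  assumes "\<And>y. y \<in> set_pmf (bind_pmf p f) \<Longrightarrow> \<bar>h y\<bar> \<le> B"
  shows "measure_pmf.expectation (bind_pmf p f) h =
         measure_pmf.expectation p (\<lambda>x. measure_pmf.expectation (f x) h)"
proof -
  define h' where "h' = (\<lambda>y. if y \<in> set_pmf (bind_pmf p f) then h y else 0)"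
  have B: "\<bar>h' y\<bar> \<le> B" for y using assms[of y] assms unfolding h'_def
    by (cases "y \<in> set_pmf (bind_pmf p f)") (auto, meson abs_ge_zero order_trans set_pmf_not_empty ex_in_conv)
  have e1: "measure_pmf.expectation (bind_pmf p f) h = measure_pmf.expectation (bind_pmf p f) h'"
    by (intro integral_cong_AE) (auto simp: AE_measure_pmf_iff h'_def)
  have e2: "measure_pmf.expectation (f x) h = measure_pmf.expectation (f x) h'" if "x \<in> set_pmf p" for x
    using that by (intro integral_cong_AE) (auto simp: AE_measure_pmf_iff h'_def)
  have "measure_pmf.expectation (bind_pmf p f) h' =
        integral\<^sup>L (measure_pmf p \<bind> (\<lambda>x. measure_pmf (f x))) h'"
    by (simp add: measure_pmf_bind)
  also have "\<dots> = measure_pmf.expectation p (\<lambda>x. measure_pmf.expectation (f x) h')"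
    apply (rule integral_bind[where K="count_space UNIV" and B=B and B'=1])
    using B by (auto simp: measure_pmf_in_subprob_algebra)
  also have "\<dots> = measure_pmf.expectation p (\<lambda>x. measure_pmf.expectation (f x) h)"
    by (intro integral_cong_AE) (auto simp: AE_measure_pmf_iff e2)
  finally show ?thesis using e1 by simp
qed

lemma measure_cond_pmf:
  assumes "set_pmf p \<inter> s \<noteq> {}"
  shows "measure_pmf.prob (cond_pmf p s) B = measure_pmf.prob p (s \<inter> B) / measure_pmf.prob p s"
  unfolding cond_pmf.rep_eq[OF assms]
  apply (rule measure_uniform_measure)
  using assms by (auto simp: measure_pmf.emeasure_eq_measure measure_measure_pmf_not_zero)

lemma bind_cond_split:
  assumes "set_pmf P \<inter> S \<noteq> {}"
  shows "P \<bind> (\<lambda>x. if x \<in> S then F x else G x) = P \<bind> (\<lambda>x. if x \<in> S then cond_pmf P S \<bind> F else G x)"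
proof -
  define R where "R = (\<lambda>x y. (x \<in> S) = (y \<in> S))"
  have canc: "P \<bind> (\<lambda>x. cond_pmf P {y. R x y}) = P"
    by (rule bind_cond_pmf_cancel) (auto simp: R_def)
  have cls: "{y. R x y} = (if x \<in> S then S else -S)" for x by (auto simp: R_def)
  have ne: "set_pmf P \<inter> {y. R x y} \<noteq> {}" if "x \<in> set_pmf P" for x using that by (auto simp: R_def)
  have *: "P \<bind> K = P \<bind> (\<lambda>x. cond_pmf P {y. R x y} \<bind> K)" for K :: "_ \<Rightarrow> 'b pmf"
    by (subst (1) canc[symmetric]) (simp add: bind_assoc_pmf)
  have L: "P \<bind> (\<lambda>x. if x \<in> S then F x else G x) =
           P \<bind> (\<lambda>x. if x \<in> S then cond_pmf P S \<bind> F else cond_pmf P {y. R x y} \<bind> G)"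
    apply (subst *)
    apply (intro bind_pmf_cong refl)
    subgoal for x
    proof (cases "x \<in> S")
      case True
      then have e: "{y. R x y} = S" using cls[of x] by simp
      have ne': "set_pmf P \<inter> S \<noteq> {}" using assms .
      show ?thesis using True unfolding e
        by (auto intro!: bind_pmf_cong simp: set_cond_pmf[OF ne'])
    next
      case False
      then have e: "{y. R x y} = -S" using cls[of x] by simp
      assume "x \<in> set_pmf P"
      then have ne': "set_pmf P \<inter> -S \<noteq> {}" using ne[of x] e by simp
      show ?thesis using False unfolding e
        by (auto intro!: bind_pmf_cong simp: set_cond_pmf[OF ne'])
    qed
    done
  have R: "P \<bind> (\<lambda>x. if x \<in> S then cond_pmf P S \<bind> F else G x) =
           P \<bind> (\<lambda>x. if x \<in> S then cond_pmf P S \<bind> F else cond_pmf P {y. R x y} \<bind> G)"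
    apply (subst *)
    apply (intro bind_pmf_cong refl)
    subgoal for x
    proof (cases "x \<in> S")
      case True
      then have e: "{y. R x y} = S" using cls[of x] by simp
      have ne': "set_pmf P \<inter> S \<noteq> {}" using assms .
      have "cond_pmf P S \<bind> (\<lambda>y. if y \<in> S then cond_pmf P S \<bind> F else G y) = cond_pmf P S \<bind> (\<lambda>_. cond_pmf P S \<bind> F)"
        by (intro bind_pmf_cong) (auto simp: set_cond_pmf[OF ne'])
      then show ?thesis using True unfolding e by simp
    next
      case False
      then have e: "{y. R x y} = -S" using cls[of x] by simp
      assume "x \<in> set_pmf P"
      then have ne': "set_pmf P \<inter> -S \<noteq> {}" using ne[of x] e by simp
      show ?thesis using False unfolding e
        by (auto intro!: bind_pmf_cong simp: set_cond_pmf[OF ne'])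
    qed
    done
  show ?thesis using L R by simp
qed

lemma filter_replicate_pmf:
  assumes ne: "set_pmf P \<inter> S \<noteq> {}"
  shows "map_pmf (filter (\<lambda>z. z \<in> S)) (replicate_pmf N P) =
         map_pmf (\<lambda>xs. length (filter (\<lambda>z. z \<in> S) xs)) (replicate_pmf N P) \<bind>
           (\<lambda>k. replicate_pmf k (cond_pmf P S))"
proof (induction N)
  case 0
  then show ?case by (simp add: bind_return_pmf)
next
  case (Suc N)
  define fl where "fl = filter (\<lambda>z. z \<in> S)"
  define R where "R = replicate_pmf N P"
  define C where "C = map_pmf (\<lambda>xs. length (fl xs)) R"
  define PS where "PS = cond_pmf P S"
  have IH: "map_pmf fl R = C \<bind> (\<lambda>k. replicate_pmf k PS)"
    using Suc unfolding fl_def R_def C_def PS_def .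
  have "map_pmf fl (replicate_pmf (Suc N) P) = P \<bind> (\<lambda>x. R \<bind> (\<lambda>xs. return_pmf (fl (x # xs))))"
    by (simp add: R_def map_bind_pmf)
  also have "\<dots> = P \<bind> (\<lambda>x. if x \<in> S then map_pmf ((#) x) (C \<bind> (\<lambda>k. replicate_pmf k PS))
                                  else C \<bind> (\<lambda>k. replicate_pmf k PS))"
    by (intro bind_pmf_cong refl) (auto simp: fl_def map_pmf_def bind_assoc_pmf bind_return_pmf
        simp flip: IH[unfolded fl_def])
  also have "\<dots> = P \<bind> (\<lambda>x. if x \<in> S then PS \<bind> (\<lambda>x. map_pmf ((#) x) (C \<bind> (\<lambda>k. replicate_pmf k PS)))
                                  else C \<bind> (\<lambda>k. replicate_pmf k PS))"
    unfolding PS_def by (rule bind_cond_split[OF ne])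
  also have "PS \<bind> (\<lambda>x. map_pmf ((#) x) (C \<bind> (\<lambda>k. replicate_pmf k PS))) =
             C \<bind> (\<lambda>k. replicate_pmf (Suc k) PS)"
    by (simp add: map_bind_pmf map_pmf_def bind_assoc_pmf bind_return_pmf)
       (rule bind_commute_pmf)
  also have "P \<bind> (\<lambda>x. if x \<in> S then C \<bind> (\<lambda>k. replicate_pmf (Suc k) PS) else C \<bind> (\<lambda>k. replicate_pmf k PS))
           = map_pmf (\<lambda>xs. length (fl xs)) (replicate_pmf (Suc N) P) \<bind> (\<lambda>k. replicate_pmf k PS)"
    by (simp add: C_def R_def map_bind_pmf bind_assoc_pmf bind_return_pmf bind_map_pmf fl_def
        cong: if_cong)
       (intro bind_pmf_cong refl, auto)
  finally show ?case unfolding fl_def PS_def .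
qed

lemma exp_indicator_pmf: "measure_pmf.expectation p (indicator A) = measure_pmf.prob p A"
  by simp

lemma exp_if_pmf:
  "measure_pmf.expectation P (\<lambda>x. if x \<in> S then (a::real) else b) = a * measure_pmf.prob P S + b * (1 - measure_pmf.prob P S)"
proof -
  have "(\<lambda>x. if x \<in> S then a else b) = (\<lambda>x. b + (a - b) * indicator S x)"
    by (auto simp: indicator_def)
  then have "measure_pmf.expectation P (\<lambda>x. if x \<in> S then a else b) =
             measure_pmf.expectation P (\<lambda>x. b + (a - b) * indicator S x)" by simp
  also have "\<dots> = b + (a - b) * measure_pmf.prob P S"
  proof -
    have int: "integrable (measure_pmf P) (indicator S :: _ \<Rightarrow> real)"
      by (rule pmf_integrable_bounded[where B=1]) (auto simp: indicator_def)
    show ?thesis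
      by (subst Bochner_Integration.integral_add) (use int in \<open>auto simp: measure_pmf.prob_space\<close>)
  qed
  finally show ?thesis by (simp add: algebra_simps)
qed

lemma count_replicate_Suc:
  "map_pmf (\<lambda>xs. length (filter (\<lambda>z. z \<in> S) xs)) (replicate_pmf (Suc N) P) =
   P \<bind> (\<lambda>x. if x \<in> S then map_pmf Suc (map_pmf (\<lambda>xs. length (filter (\<lambda>z. z \<in> S) xs)) (replicate_pmf N P))
            else map_pmf (\<lambda>xs. length (filter (\<lambda>z. z \<in> S) xs)) (replicate_pmf N P))"
  by (simp add: map_bind_pmf pmf.map_comp o_def cong: if_cong)
     (intro bind_pmf_cong refl, auto simp: map_pmf_def)

lemma prob_bind_pmf:
  "measure_pmf.prob (bind_pmf p f) A = measure_pmf.expectation p (\<lambda>x. measure_pmf.prob (f x) A)"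
proof -
  have "measure_pmf.prob (bind_pmf p f) A = measure_pmf.expectation (bind_pmf p f) (indicator A)"
    by simp
  also have "\<dots> = measure_pmf.expectation p (\<lambda>x. measure_pmf.expectation (f x) (indicator A))"
    by (rule exp_bind_pmf[where B=1]) (auto simp: indicator_def)
  finally show ?thesis by simp
qed

lemma count_tail_bound:
  fixes P :: "'a pmf" and S :: "'a set"
  defines "p \<equiv> measure_pmf.prob P S"
  shows "p * measure_pmf.prob (map_pmf (\<lambda>xs. length (filter (\<lambda>z. z \<in> S) xs)) (replicate_pmf N P)) {..<k}
         \<le> real k / real (N + 1)"
proof (induction N arbitrary: k)
  case 0
  have "p \<le> 1" unfolding p_def by simp
  moreover have "measure_pmf.prob (return_pmf (0::nat)) {..<k} \<le> real k"
    by (cases k) (auto simp: indicator_def)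
  moreover have "p \<ge> 0" unfolding p_def by simp
  ultimately have "p * measure_pmf.prob (return_pmf (0::nat)) {..<k} \<le> 1 * real k"
    by (intro mult_mono) auto
  then show ?case by simp
next
  case (Suc N)
  define C where "C = map_pmf (\<lambda>xs. length (filter (\<lambda>z. z \<in> S) xs)) (replicate_pmf N P)"
  define q where "q = (\<lambda>k. measure_pmf.prob C {..<k})"
  have p01: "0 \<le> p" "p \<le> 1" unfolding p_def by auto
  have IH: "p * q k \<le> real k / real (N + 1)" for k using Suc unfolding q_def C_def .
  have q01: "0 \<le> q k" "q k \<le> 1" for k unfolding q_def by auto
  show ?case
  proof (cases k)
    case 0
    then show ?thesis by simp
  next
    case (Suc k')
    have "measure_pmf.prob (map_pmf (\<lambda>xs. length (filter (\<lambda>z. z \<in> S) xs)) (replicate_pmf (Suc N) P)) {..<k}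
          = measure_pmf.expectation P (\<lambda>x. if x \<in> S then q k' else q k)"
      unfolding count_replicate_Suc prob_bind_pmf C_def[symmetric]
      apply (intro integral_cong_AE)
      by (auto simp: q_def Suc intro!: arg_cong[where f="measure_pmf.prob C"])
    also have "\<dots> = q k' * p + q k * (1 - p)" unfolding exp_if_pmf p_def ..
    finally have eq: "measure_pmf.prob (map_pmf (\<lambda>xs. length (filter (\<lambda>z. z \<in> S) xs)) (replicate_pmf (Suc N) P)) {..<k} = q k' * p + q k * (1 - p)" .
    have b1: "p * (q k' * p + q k * (1 - p)) \<le> (real k - p) / real (N + 1)"
    proof -
      have "p * (q k' * p + q k * (1 - p)) = p * (p * q k') + (1 - p) * (p * q k)" by (simp add: algebra_simps)
      also have "\<dots> \<le> p * (real k' / real (N+1)) + (1 - p) * (real k / real (N+1))"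
        using IH[of k'] IH[of k] p01 by (intro add_mono mult_left_mono) auto
      also have "\<dots> = (p * real k' + (1 - p) * real k) / real (N + 1)" by (simp add: add_divide_distrib)
      also have "\<dots> = (real k - p) / real (N + 1)" using Suc by (simp add: algebra_simps)
      finally show ?thesis .
    qed
    have b2: "p * (q k' * p + q k * (1 - p)) \<le> p"
    proof -
      have "q k' * p + q k * (1 - p) \<le> 1 * p + 1 * (1 - p)"
        using q01[of k'] q01[of k] p01 by (intro add_mono mult_right_mono) auto
      then show ?thesis using p01 mult_left_mono[of "q k' * p + q k * (1 - p)" 1 p] by simp
    qed
    have "p * (q k' * p + q k * (1 - p)) \<le> real k / real (Suc N + 1)"
    proof (cases "p \<le> real k / real (Suc N + 1)")
      case True then show ?thesis using b2 by linarith
    next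
      case False
      then have "p * real (N + 2) > real k" by (simp add: field_simps)
      then have "(real k - p) / real (N + 1) \<le> real k / real (N + 2)"
        by (simp add: field_simps)
      then show ?thesis using b1 by simp
    qed
    then show ?thesis using eq by simp
  qed
qed

lemma take_replicate_pmf:
  assumes "m \<le> k"
  shows "map_pmf (take m) (replicate_pmf k P) = replicate_pmf m P"
proof -
  have k: "k = m + (k - m)" using assms by simp
  have "map_pmf (take m) (replicate_pmf k P) =
        replicate_pmf m P \<bind> (\<lambda>xs. replicate_pmf (k - m) P \<bind> (\<lambda>ys. return_pmf (take m (xs @ ys))))"
    by (subst k, subst replicate_pmf_distrib) (simp add: map_bind_pmf)
  also have "\<dots> = replicate_pmf m P \<bind> (\<lambda>xs. return_pmf xs)"
    by (intro bind_pmf_cong refl) (auto simp: set_replicate_pmf)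
  also have "\<dots> = replicate_pmf m P" by (rule bind_return_pmf')
  finally show ?thesis .
qed

lemma exp_01:
  fixes h :: "'a \<Rightarrow> real"
  assumes "\<And>y. 0 \<le> h y \<and> h y \<le> 1"
  shows "0 \<le> measure_pmf.expectation p h \<and> measure_pmf.expectation p h \<le> 1"
proof -
  have "measure_pmf.expectation p h \<le> measure_pmf.expectation p (\<lambda>_. 1)"
    using assms by (intro integral_mono pmf_integrable_bounded[where B=1]) (auto simp: abs_le_iff)
  moreover have "0 \<le> measure_pmf.expectation p h"
    using assms by (intro integral_nonneg_AE) auto
  ultimately show ?thesis by simp
qed

lemma leaf_bound:
  fixes P :: "'a pmf" and S :: "'a set" and A :: "'a list \<Rightarrow> 'h pmf" and err :: "'h \<Rightarrow> real"
  assumes ne: "set_pmf P \<inter> S \<noteq> {}"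
    and err01: "\<And>h. 0 \<le> err h \<and> err h \<le> 1"
    and uses: "\<And>xs. m \<le> length xs \<Longrightarrow> A xs = A (take m xs)"
    and learn: "measure_pmf.expectation (replicate_pmf m (cond_pmf P S) \<bind> A) err \<le> \<epsilon>"
  shows "measure_pmf.expectation (replicate_pmf N P)
           (\<lambda>xs. measure_pmf.expectation (A (filter (\<lambda>z. z \<in> S) xs)) err)
         \<le> \<epsilon> + measure_pmf.prob (map_pmf (\<lambda>xs. length (filter (\<lambda>z. z \<in> S) xs)) (replicate_pmf N P)) {..<m}"
proof -
  define g where "g = (\<lambda>ys. measure_pmf.expectation (A ys) err)"
  define PS where "PS = cond_pmf P S"
  define C where "C = map_pmf (\<lambda>xs. length (filter (\<lambda>z. z \<in> S) xs)) (replicate_pmf N P)"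
  have g01: "0 \<le> g ys \<and> g ys \<le> 1" for ys
    unfolding g_def by (rule exp_01) (use err01 in auto)
  have gabs: "\<bar>g ys\<bar> \<le> 1" for ys using g01[of ys] by auto
  have learn': "measure_pmf.expectation (replicate_pmf m PS) g \<le> \<epsilon>"
  proof -
    have "measure_pmf.expectation (replicate_pmf m PS \<bind> A) err =
          measure_pmf.expectation (replicate_pmf m PS) g"
      unfolding g_def by (rule exp_bind_pmf[where B=1]) (use err01 in \<open>auto simp: abs_le_iff\<close>)
    then show ?thesis using learn unfolding PS_def by simp
  qed
  have eps0: "0 \<le> \<epsilon>"
    using learn' exp_01[of g "replicate_pmf m PS", OF g01] by linarith
  have pw: "measure_pmf.expectation (replicate_pmf k PS) g \<le> \<epsilon> + indicator {..<m} k" for k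
  proof (cases "k < m")
    case True
    have "measure_pmf.expectation (replicate_pmf k PS) g \<le> measure_pmf.expectation (replicate_pmf k PS) (\<lambda>_. 1)"
      using g01 by (intro integral_mono pmf_integrable_bounded[where B=1]) (auto simp: abs_le_iff)
    then show ?thesis using True eps0 by simp
  next
    case False
    have "measure_pmf.expectation (replicate_pmf k PS) g =
          measure_pmf.expectation (replicate_pmf k PS) (\<lambda>xs. g (take m xs))"
      using False by (intro integral_cong_AE) (auto simp: AE_measure_pmf_iff set_replicate_pmf g_def intro!: arg_cong[where f="\<lambda>x. measure_pmf.expectation x err"] uses)
    also have "\<dots> = measure_pmf.expectation (map_pmf (take m) (replicate_pmf k PS)) g"
      by simp
    also have "\<dots> = measure_pmf.expectation (replicate_pmf m PS) g"
      using False by (subst take_replicate_pmf) auto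
    finally show ?thesis using learn' False by simp
  qed
  have "measure_pmf.expectation (replicate_pmf N P) (\<lambda>xs. g (filter (\<lambda>z. z \<in> S) xs)) =
        measure_pmf.expectation (map_pmf (filter (\<lambda>z. z \<in> S)) (replicate_pmf N P)) g"
    by simp
  also have "\<dots> = measure_pmf.expectation (C \<bind> (\<lambda>k. replicate_pmf k PS)) g"
    unfolding C_def PS_def by (subst filter_replicate_pmf[OF ne]) simp
  also have "\<dots> = measure_pmf.expectation C (\<lambda>k. measure_pmf.expectation (replicate_pmf k PS) g)"
    by (rule exp_bind_pmf[where B=1]) (use gabs in auto)
  also have "\<dots> \<le> measure_pmf.expectation C (\<lambda>k. \<epsilon> + indicator {..<m} k)"
  proof (rule integral_mono)
    show "integrable (measure_pmf C) (\<lambda>k. measure_pmf.expectation (replicate_pmf k PS) g)"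
      apply (rule pmf_integrable_bounded[where B=1])
      using exp_01[of g] g01 by (auto simp: abs_le_iff)
    show "integrable (measure_pmf C) (\<lambda>k. \<epsilon> + indicator {..<m} k)"
      by (rule pmf_integrable_bounded[where B="\<epsilon> + 1"]) (use eps0 in \<open>auto simp: indicator_def\<close>)
  qed (rule pw)
  also have "\<dots> = \<epsilon> + measure_pmf.prob C {..<m}"
  proof -
    have int: "integrable (measure_pmf C) (indicator {..<m} :: nat \<Rightarrow> real)"
      by (rule pmf_integrable_bounded[where B=1]) (auto simp: indicator_def)
    show ?thesis
      by (subst Bochner_Integration.integral_add) (use int in \<open>auto simp: measure_pmf.prob_space\<close>)
  qed
  finally show ?thesis unfolding g_def C_def .
qed

lemma length_filter_sum_list:
  "real (length (filter Q xs)) = sum_list (map (\<lambda>z. if Q z then 1 else 0) xs)"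
  by (induction xs) auto

lemma exp_replicate_Suc:
  fixes F :: "'a list \<Rightarrow> real"
  assumes "\<And>xs. xs \<in> set_pmf (replicate_pmf (Suc k) P) \<Longrightarrow> \<bar>F xs\<bar> \<le> B"
  shows "measure_pmf.expectation (replicate_pmf (Suc k) P) F =
         measure_pmf.expectation P (\<lambda>x. measure_pmf.expectation (replicate_pmf k P) (\<lambda>xs. F (x # xs)))"
proof -
  have eq: "replicate_pmf (Suc k) P = P \<bind> (\<lambda>x. map_pmf ((#) x) (replicate_pmf k P))"
    by (simp add: map_pmf_def)
  show ?thesis
    unfolding eq
    by (subst exp_bind_pmf[where B=B]) (use assms eq in auto)
qed

lemma sum_list_bound:
  fixes \<phi> :: "'a \<Rightarrow> real"
  assumes "\<And>z. z \<in> set xs \<Longrightarrow> \<bar>\<phi> z\<bar> \<le> B"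
  shows "\<bar>sum_list (map \<phi> xs)\<bar> \<le> real (length xs) * B"
  using assms
proof (induction xs)
  case (Cons a xs)
  then have "\<bar>\<phi> a + sum_list (map \<phi> xs)\<bar> \<le> B + real (length xs) * B"
    by (smt (verit) list.set_intros)
  then show ?case by (simp add: algebra_simps)
qed simp

lemma exp_sum_list_replicate:
  fixes \<phi> :: "'a \<Rightarrow> real"
  assumes "\<And>z. \<bar>\<phi> z\<bar> \<le> B"
  shows "measure_pmf.expectation (replicate_pmf k P) (\<lambda>xs. sum_list (map \<phi> xs)) =
         real k * measure_pmf.expectation P \<phi>"
proof (induction k)
  case 0 then show ?case by simp
next
  case (Suc k)
  have B: "\<bar>sum_list (map \<phi> xs)\<bar> \<le> real (length xs) * B" for xs
    by (rule sum_list_bound) (use assms in auto)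
  have B': "\<bar>\<phi> x + sum_list (map \<phi> xs)\<bar> \<le> real (Suc (length xs)) * B" for x xs
    using assms[of x] B[of xs] by (simp add: algebra_simps)
  have "measure_pmf.expectation (replicate_pmf (Suc k) P) (\<lambda>xs. sum_list (map \<phi> xs)) =
        measure_pmf.expectation P (\<lambda>x. measure_pmf.expectation (replicate_pmf k P) (\<lambda>xs. \<phi> x + sum_list (map \<phi> xs)))"
    by (subst exp_replicate_Suc[where B="real (Suc k) * B"]) (use B' in \<open>auto simp: set_replicate_pmf\<close>)
  also have "\<dots> = measure_pmf.expectation P (\<lambda>x. \<phi> x + real k * measure_pmf.expectation P \<phi>)"
  proof (intro Bochner_Integration.integral_cong refl)
    fix x
    have "measure_pmf.expectation (replicate_pmf k P) (\<lambda>xs. \<phi> x + sum_list (map \<phi> xs)) =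
          \<phi> x + measure_pmf.expectation (replicate_pmf k P) (\<lambda>xs. sum_list (map \<phi> xs))"
      apply (subst Bochner_Integration.integral_add)
      using B by (auto simp: measure_pmf.prob_space set_replicate_pmf intro!: pmf_integrable_bounded[where B="real k * B"])
    then show "measure_pmf.expectation (replicate_pmf k P) (\<lambda>xs. \<phi> x + sum_list (map \<phi> xs)) =
               \<phi> x + real k * measure_pmf.expectation P \<phi>" using Suc by simp
  qed
  also have "\<dots> = measure_pmf.expectation P \<phi> + real k * measure_pmf.expectation P \<phi>"
    apply (subst Bochner_Integration.integral_add)
    using assms by (auto simp: measure_pmf.prob_space intro!: pmf_integrable_bounded[where B=B])
  finally show ?case by (simp add: algebra_simps)
qed

lemma prod_list_bound:
  fixes \<phi> :: "'a \<Rightarrow> real"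
  assumes "\<And>z. 0 \<le> \<phi> z \<and> \<phi> z \<le> B"
  shows "0 \<le> prod_list (map \<phi> xs) \<and> prod_list (map \<phi> xs) \<le> B ^ length xs"
  using assms
proof (induction xs)
  case (Cons a xs)
  have B0: "0 \<le> B" using Cons.prems[of a] by linarith
  have "\<phi> a * prod_list (map \<phi> xs) \<le> B * B ^ length xs"
    by (rule mult_mono) (use Cons B0 in auto)
  then show ?case using Cons by simp
qed simp

lemma exp_prod_list_replicate:
  fixes \<phi> :: "'a \<Rightarrow> real"
  assumes "\<And>z. 0 \<le> \<phi> z \<and> \<phi> z \<le> B"
  shows "measure_pmf.expectation (replicate_pmf k P) (\<lambda>xs. prod_list (map \<phi> xs)) =
         (measure_pmf.expectation P \<phi>) ^ k"
proof (induction k)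
  case 0 then show ?case by simp
next
  case (Suc k)
  have B: "\<bar>prod_list (map \<phi> xs)\<bar> \<le> B ^ length xs" for xs
    using prod_list_bound[of \<phi> B xs] assms by auto
  have B': "\<bar>\<phi> x * prod_list (map \<phi> xs)\<bar> \<le> B ^ Suc (length xs)" for x xs
    using prod_list_bound[of \<phi> B "x#xs"] assms by auto
  have "measure_pmf.expectation (replicate_pmf (Suc k) P) (\<lambda>xs. prod_list (map \<phi> xs)) =
        measure_pmf.expectation P (\<lambda>x. measure_pmf.expectation (replicate_pmf k P) (\<lambda>xs. \<phi> x * prod_list (map \<phi> xs)))"
    by (subst exp_replicate_Suc[where B="B ^ Suc k"]) (use B' in \<open>auto simp: set_replicate_pmf\<close>)
  also have "\<dots> = measure_pmf.expectation P (\<lambda>x. \<phi> x * (measure_pmf.expectation P \<phi>) ^ k)"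
    by (intro Bochner_Integration.integral_cong refl) (simp add: Suc[symmetric])
  also have "\<dots> = (measure_pmf.expectation P \<phi>) ^ Suc k"
    by simp
  finally show ?case .
qed

lemma exp_sum_list: "exp (sum_list (map (\<phi> :: 'a \<Rightarrow> real) xs)) = prod_list (map (\<lambda>z. exp (\<phi> z)) xs)"
  by (induction xs) (auto simp: exp_add)

lemma mgf_bound:
  fixes w :: "'a \<Rightarrow> real"
  assumes w01: "\<And>z. 0 \<le> w z \<and> w z \<le> 1" and l: "l > 0"
  shows "measure_pmf.expectation P (\<lambda>z. exp (l * (measure_pmf.expectation P w - w z))) \<le> exp (l\<^sup>2 / 8)"
proof -
  interpret interval_bounded_random_variable "measure_pmf P" "\<lambda>z. - w z" "-1" "0"
    by unfold_locales (use w01 in \<open>auto simp: AE_measure_pmf_iff\<close>)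
  have H: "nn_integral (measure_pmf P) (\<lambda>x. exp (l * (- w x - measure_pmf.expectation P (\<lambda>z. - w z))))
        \<le> ennreal (exp (l\<^sup>2 * (0 - (-1))\<^sup>2 / 8))"
    by (rule Hoeffdings_lemma_nn_integral[OF l])
  have eq: "(\<lambda>x. ennreal (exp (l * (- w x - measure_pmf.expectation P (\<lambda>z. - w z))))) =
            (\<lambda>z. ennreal (exp (l * (measure_pmf.expectation P w - w z))))"
    by (simp add: algebra_simps)
  have int: "integrable (measure_pmf P) (\<lambda>z. exp (l * (measure_pmf.expectation P w - w z)))"
  proof (rule pmf_integrable_bounded[where B="exp (l * 1)"])
    fix z
    have "measure_pmf.expectation P w \<le> 1" using exp_01[of w P] w01 by auto
    then have "l * (measure_pmf.expectation P w - w z) \<le> l * 1"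
      using w01[of z] l by (intro mult_left_mono) auto
    then show "\<bar>exp (l * (measure_pmf.expectation P w - w z))\<bar> \<le> exp (l * 1)" by simp
  qed
  have "ennreal (measure_pmf.expectation P (\<lambda>z. exp (l * (measure_pmf.expectation P w - w z))))
        \<le> ennreal (exp (l\<^sup>2 / 8))"
    using H unfolding eq by (subst (asm) nn_integral_eq_integral[OF int]) (auto simp: power2_eq_square)
  then show ?thesis by (subst (asm) ennreal_le_iff) auto
qed

lemma sum_list_minus_const:
  "sum_list (map (\<lambda>z. c - (\<phi> z :: real)) xs) = real (length xs) * c - sum_list (map \<phi> xs)"
  by (induction xs) (auto simp: algebra_simps)

lemma erm_bound:
  fixes P :: "'a pmf" and I :: "'t set" and w :: "'t \<Rightarrow> 'a \<Rightarrow> real" and B :: "'a list \<Rightarrow> 't"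
    and k :: nat and l :: real
  assumes fin: "finite I" and Ts: "Ts \<in> I"
    and w01: "\<And>t z. 0 \<le> w t z \<and> w t z \<le> 1"
    and k: "k > 0"
    and BI: "\<And>S. B S \<in> I"
    and Bmin: "\<And>S t. length S = k \<Longrightarrow> t \<in> I \<Longrightarrow> sum_list (map (w (B S)) S) \<le> sum_list (map (w t) S)"
    and l: "l > 0"
  shows "measure_pmf.expectation (replicate_pmf k P) (\<lambda>S. measure_pmf.expectation P (w (B S)))
         \<le> measure_pmf.expectation P (w Ts) + ln (real (card I)) / (l * real k) + l / 8"
proof -
  define e where "e = (\<lambda>t. measure_pmf.expectation P (w t))"
  define s where "s = (\<lambda>t S. sum_list (map (w t) S))"
  define D where "D = (\<lambda>t S. e t - s t S / real k)"
  define M where "M = (\<lambda>S. Max ((\<lambda>t. D t S) ` I))"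
  define R where "R = replicate_pmf k P"
  have Ine: "I \<noteq> {}" using Ts by auto
  have suppR: "length S = k" if "S \<in> set_pmf R" for S using that by (auto simp: R_def set_replicate_pmf)
  have e01: "0 \<le> e t \<and> e t \<le> 1" for t unfolding e_def by (rule exp_01) (use w01 in auto)
  have s01: "0 \<le> s t S \<and> s t S \<le> real (length S)" for t S
  proof -
    have "\<bar>s t S\<bar> \<le> real (length S) * 1" unfolding s_def by (rule sum_list_bound) (use w01 in auto)
    moreover have "0 \<le> s t S" unfolding s_def by (induction S) (use w01 in \<open>auto intro: add_nonneg_nonneg\<close>)
    ultimately show ?thesis by simp
  qed
  have D1: "\<bar>D t S\<bar> \<le> 1" if "length S = k" for t S
  proof -
    have "s t S / real k \<le> 1" "0 \<le> s t S / real k" using s01[of t S] that k by (auto simp: field_simps)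
    then show ?thesis using e01[of t] unfolding D_def by auto
  qed
  have Min: "M S \<in> (\<lambda>t. D t S) ` I" for S unfolding M_def by (rule Max_in) (use fin Ine in auto)
  have Mge: "D t S \<le> M S" if "t \<in> I" for t S unfolding M_def by (rule Max_ge) (use fin that in auto)
  have M1: "\<bar>M S\<bar> \<le> 1" if "length S = k" for S using Min[of S] D1[OF that] by auto
  have pw: "e (B S) \<le> M S + s Ts S / real k" if "length S = k" for S
  proof -
    have "e (B S) = D (B S) S + s (B S) S / real k" unfolding D_def by simp
    also have "\<dots> \<le> M S + s Ts S / real k"
      using Mge[OF BI, of S] Bmin[OF that Ts] k unfolding s_def by (intro add_mono divide_right_mono) auto
    finally show ?thesis .
  qed
  have intM: "integrable (measure_pmf R) M"
    by (rule pmf_integrable_bounded[where B=1]) (use M1 suppR in auto)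
  have ints: "integrable (measure_pmf R) (\<lambda>S. s Ts S / real k)"
    by (rule pmf_integrable_bounded[where B=1]) (use s01 suppR k in \<open>auto simp: field_simps\<close>)
  have Es: "measure_pmf.expectation R (\<lambda>S. s Ts S / real k) = e Ts"
  proof -
    have "measure_pmf.expectation R (\<lambda>S. s Ts S) = real k * e Ts"
      unfolding R_def s_def e_def by (rule exp_sum_list_replicate[where B=1]) (use w01 in auto)
    then show ?thesis using k by simp
  qed
  have EM: "measure_pmf.expectation R M \<le> ln (real (card I)) / (l * real k) + l / 8"
  proof -
    define X where "X = (\<lambda>S. l * real k * M S)"
    have intX: "integrable (measure_pmf R) X" unfolding X_def using intM by simp
    have intEX: "integrable (measure_pmf R) (\<lambda>S. exp (X S))"
    proof (rule pmf_integrable_bounded[where B="exp (l * real k)"])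
      fix S assume "S \<in> set_pmf R"
      then have "M S \<le> 1" using M1 suppR by fastforce
      then have "X S \<le> l * real k" unfolding X_def using l k
        by (metis mult.right_neutral mult_left_mono mult_nonneg_nonneg of_nat_0_le_iff less_imp_le)
      then show "\<bar>exp (X S)\<bar> \<le> exp (l * real k)" by simp
    qed
    have J: "exp (measure_pmf.expectation R X) \<le> measure_pmf.expectation R (\<lambda>S. exp (X S))"
      using measure_pmf.jensens_inequality[of R X UNIV 0 0 exp] intX intEX convex_on_exp[of 1]
      by auto
    define Y where "Y = (\<lambda>t S. prod_list (map (\<lambda>z. exp (l * (e t - w t z))) S))"
    have XY: "exp (X S) \<le> (\<Sum>t\<in>I. Y t S)" if "length S = k" for S
    proof -
      obtain t0 where t0: "t0 \<in> I" "M S = D t0 S" using Min[of S] by auto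
      have "l * real k * D t S = sum_list (map (\<lambda>z. l * (e t - w t z)) S)" for t
      proof -
        have "sum_list (map (\<lambda>z. l * (e t - w t z)) S) = l * sum_list (map (\<lambda>z. e t - w t z) S)"
          by (induction S) (auto simp: algebra_simps)
        also have "\<dots> = l * (real k * e t - s t S)" unfolding sum_list_minus_const s_def using that by simp
        moreover have "l * real k * D t S = l * (real k * e t - s t S)"
          unfolding D_def using k by (simp add: field_simps)
        ultimately show ?thesis by simp
      qed
      then have "exp (X S) = Y t0 S" unfolding X_def Y_def t0(2) by (simp add: exp_sum_list)
      also have "\<dots> \<le> (\<Sum>t\<in>I. Y t S)"
        by (rule member_le_sum) (use fin t0 in \<open>auto simp: Y_def intro!: prod_list_nonneg\<close>)
      finally show ?thesis .
    qed
    have Ybd: "0 \<le> exp (l * (e t - w t z)) \<and> exp (l * (e t - w t z)) \<le> exp l" for t z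
    proof -
      have "l * (e t - w t z) \<le> l * 1" using e01[of t] w01[of t z] l by (intro mult_left_mono) auto
      then show ?thesis by simp
    qed
    have intY: "integrable (measure_pmf R) (Y t)" for t
      unfolding Y_def
      apply (rule pmf_integrable_bounded[where B="exp l ^ k"])
      subgoal for S using prod_list_bound[of "\<lambda>z. exp (l * (e t - w t z))" "exp l" S] Ybd suppR[of S] by auto
      done
    have "measure_pmf.expectation R (\<lambda>S. exp (X S)) \<le> measure_pmf.expectation R (\<lambda>S. \<Sum>t\<in>I. Y t S)"
      by (rule integral_mono_AE) (use intEX intY XY suppR in \<open>auto simp: AE_measure_pmf_iff\<close>)
    also have "\<dots> = (\<Sum>t\<in>I. measure_pmf.expectation R (Y t))"
      by (rule Bochner_Integration.integral_sum) (use intY in auto)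
    also have "\<dots> \<le> (\<Sum>t\<in>I. exp (l\<^sup>2 / 8) ^ k)"
    proof (rule sum_mono)
      fix t assume "t \<in> I"
      have "measure_pmf.expectation R (Y t) = (measure_pmf.expectation P (\<lambda>z. exp (l * (e t - w t z)))) ^ k"
        unfolding R_def Y_def by (rule exp_prod_list_replicate[where B="exp l"]) (use Ybd in auto)
      also have "\<dots> \<le> exp (l\<^sup>2 / 8) ^ k"
        apply (rule power_mono)
        subgoal unfolding e_def by (rule mgf_bound) (use w01 l in auto)
        subgoal by (rule integral_nonneg_AE) auto
        done
      finally show "measure_pmf.expectation R (Y t) \<le> exp (l\<^sup>2 / 8) ^ k" .
    qed
    also have "\<dots> = real (card I) * exp (real k * l\<^sup>2 / 8)"
      by (simp add: exp_of_nat_mult[symmetric] mult.commute)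
    finally have "exp (measure_pmf.expectation R X) \<le> real (card I) * exp (real k * l\<^sup>2 / 8)"
      using J by linarith
    moreover have cI: "real (card I) > 0" using fin Ine by (simp add: card_gt_0_iff)
    ultimately have "measure_pmf.expectation R X \<le> ln (real (card I) * exp (real k * l\<^sup>2 / 8))"
      by (metis exp_gt_zero exp_le_cancel_iff exp_ln mult_pos_pos)
    also have "\<dots> = ln (real (card I)) + real k * l\<^sup>2 / 8" using cI by (simp add: ln_mult)
    finally have "l * real k * measure_pmf.expectation R M \<le> ln (real (card I)) + real k * l\<^sup>2 / 8"
      unfolding X_def by simp
    then have "measure_pmf.expectation R M \<le> (ln (real (card I)) + real k * l\<^sup>2 / 8) / (l * real k)"
      using l k by (simp add: field_simps mult.commute)
    also have "\<dots> = ln (real (card I)) / (l * real k) + l / 8"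
      using l k by (simp add: field_simps power2_eq_square)
    finally show ?thesis .
  qed
  have "measure_pmf.expectation R (\<lambda>S. e (B S)) \<le> measure_pmf.expectation R (\<lambda>S. M S + s Ts S / real k)"
  proof (rule integral_mono_AE)
    show "integrable (measure_pmf R) (\<lambda>S. e (B S))"
      by (rule pmf_integrable_bounded[where B=1]) (use e01 in \<open>auto simp: abs_le_iff\<close>)
    show "integrable (measure_pmf R) (\<lambda>S. M S + s Ts S / real k)" using intM ints by simp
    show "AE S in measure_pmf R. e (B S) \<le> M S + s Ts S / real k"
      using pw suppR by (auto simp: AE_measure_pmf_iff)
  qed
  also have "\<dots> = measure_pmf.expectation R M + e Ts"
    using intM ints Es by simp
  finally show ?thesis using EM unfolding R_def e_def by simp
qed

lemma error_eq_exp: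
  "error h P = measure_pmf.expectation P (\<lambda>z. if h (fst z) \<noteq> snd z then 1 else 0)"
proof -
  have "(\<lambda>z. if h (fst z) \<noteq> snd z then 1 else 0) = (indicator {(x, y). h x \<noteq> y} :: _ \<Rightarrow> real)"
    by (auto simp: indicator_def)
  then show ?thesis unfolding error_def by simp
qed

lemma error01: "0 \<le> error h P \<and> error h P \<le> 1"
  unfolding error_def by auto

lemma finite_depth_restrs: "finite (depth_restrs n d)"
proof -
  have "depth_restrs n d \<subseteq> {xs. set xs \<subseteq> UNIV \<and> length xs = n}"
    by (auto simp: depth_restrs_def restrs_def)
  moreover have "finite {xs :: bool option list. set xs \<subseteq> UNIV \<and> length xs = n}"
    by (rule finite_lists_length_eq) simp
  ultimately show ?thesis by (rule finite_subset)
qed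

lemma leaf_in_depth_restrs: "dtree n d T \<Longrightarrow> l \<in> T \<Longrightarrow> l \<in> depth_restrs n d"
  using dtree_leaves[of n d T] by (auto simp: depth_restrs_def restrs_def)

lemma leaf_sum:
  fixes c :: "restr \<Rightarrow> real"
  assumes "dtree n d T" "length x = n"
  shows "(\<Sum>l\<in>T. if in_restr x l then c l else 0) = c (THE l. l \<in> T \<and> in_restr x l)"
proof -
  obtain l0 where l0: "l0 \<in> T" "in_restr x l0" "\<And>l. l \<in> T \<Longrightarrow> in_restr x l \<Longrightarrow> l = l0"
    using dtree_partition[OF assms] by metis
  have th: "(THE l. l \<in> T \<and> in_restr x l) = l0"
    by (rule the_equality) (use l0(1,2) l0(3) in blast)+
  have "(\<Sum>l\<in>T. if in_restr x l then c l else 0) = (\<Sum>l\<in>T. if l = l0 then c l else 0)"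
  proof (rule sum.cong[OF refl])
    fix l assume "l \<in> T"
    then have "in_restr x l \<longleftrightarrow> l = l0" using l0 by blast
    then show "(if in_restr x l then c l else 0) = (if l = l0 then c l else 0)" by simp
  qed
  also have "\<dots> = c l0" using l0(1) dtree_leaves[OF assms(1)] by (simp add: sum.delta)
  finally show ?thesis using th by simp
qed

lemma best_tree_props:
  assumes "dtree n d T0"
  shows "dtree n d (best_tree n d H S) \<and>
         (\<forall>T'. dtree n d T' \<longrightarrow> sample_error (tree_eval (best_tree n d H S) H) S \<le> sample_error (tree_eval T' H) S)"
proof -
  let ?T = "{T. dtree n d T}"
  let ?f = "\<lambda>T. sample_error (tree_eval T H) S"
  have fin: "finite ?T" using dtree_count[of n d] by auto
  have ne: "?T \<noteq> {}" using assms by auto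
  have "dtree n d (arg_min_on ?f ?T) \<and> (\<forall>T'. dtree n d T' \<longrightarrow> ?f (arg_min_on ?f ?T) \<le> ?f T')"
    using arg_min_if_finite(1)[OF fin ne, of ?f] arg_min_least[OF fin ne, of _ ?f] by auto
  then show ?thesis unfolding best_tree_def by (rule someI)
qed

lemma sample_error_sum:
  "length S = k \<Longrightarrow> sample_error h S = sum_list (map (\<lambda>z. if h (fst z) \<noteq> snd z then 1 else 0) S) / real k"
  unfolding sample_error_def
  by (subst length_filter_sum_list) (simp add: case_prod_beta)

lemma test_part:
  fixes P :: "(point \<times> bool) pmf"
  assumes Ts: "dtree n d Ts" and eps: "\<epsilon> > 0"
    and mt: "real mtest \<ge> 2 ^ d * ln (real n) / \<epsilon> ^ 2"
  shows "measure_pmf.expectation (replicate_pmf mtest P)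
           (\<lambda>Ste. error (tree_eval (best_tree n d H Ste) H) P) \<le> error (tree_eval Ts H) P + \<epsilon>"
proof -
  let ?T = "{T. dtree n d T}"
  have fin: "finite ?T" and cardT: "card ?T \<le> n ^ (2^d - 1)" using dtree_count[of n d] by auto
  have TsT: "Ts \<in> ?T" using Ts by simp
  have cpos: "card ?T > 0" using fin TsT by (auto simp: card_gt_0_iff)
  show ?thesis
  proof (cases "card ?T = 1")
    case True
    then obtain T1 where "?T = {T1}" by (auto simp: card_Suc_eq)
    then have single: "\<And>T. dtree n d T \<Longrightarrow> T = Ts" using TsT by auto
    have "(\<lambda>Ste. error (tree_eval (best_tree n d H Ste) H) P) = (\<lambda>_. error (tree_eval Ts H) P)"
      using single best_tree_props[OF Ts] by metis
    then show ?thesis using eps by simp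
  next
    case False
    then have c2: "card ?T \<ge> 2" using cpos by linarith
    have n2: "n \<ge> 2"
    proof (rule ccontr)
      assume "\<not> n \<ge> 2"
      then have "n ^ (2^d - 1) \<le> 1" by (intro power_le_one) auto
      then show False using c2 cardT by linarith
    qed
    have lnc: "ln (real (card ?T)) \<le> 2 ^ d * ln (real n)"
    proof -
      have "ln (real (card ?T)) \<le> ln (real (n ^ (2^d - 1)))"
        using cardT cpos n2 by (subst ln_le_cancel_iff) auto
      also have "\<dots> = real (2^d - 1) * ln (real n)" using n2 by (simp add: ln_realpow)
      also have "\<dots> \<le> 2 ^ d * ln (real n)"
        using n2 by (intro mult_right_mono) auto
      finally show ?thesis .
    qed
    have lnpos: "ln (real (card ?T)) > 0" using c2 by simp
    have mt2: "ln (real (card ?T)) \<le> real mtest * \<epsilon>\<^sup>2"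
    proof -
      have "ln (real (card ?T)) / \<epsilon>\<^sup>2 \<le> real mtest"
        using lnc mt eps by (meson divide_right_mono order.trans zero_le_power2 less_imp_le)
      then show ?thesis using eps by (simp add: field_simps)
    qed
    have k: "mtest > 0"
    proof (rule ccontr)
      assume "\<not> mtest > 0" then show False using mt2 lnpos by simp
    qed
    define w where "w = (\<lambda>T z. if tree_eval T H (fst z) \<noteq> snd z then 1 else (0::real))"
    have E: "measure_pmf.expectation (replicate_pmf mtest P) (\<lambda>S. measure_pmf.expectation P (w (best_tree n d H S)))
          \<le> measure_pmf.expectation P (w Ts) + ln (real (card ?T)) / (4 * \<epsilon> * real mtest) + 4 * \<epsilon> / 8"
    proof (rule erm_bound[OF fin TsT, where w=w and B="best_tree n d H" and l="4*\<epsilon>" and k=mtest and P=P])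
      show "\<And>t z. 0 \<le> w t z \<and> w t z \<le> 1" by (auto simp: w_def)
      show "0 < mtest" by fact
      show "\<And>S. best_tree n d H S \<in> ?T" using best_tree_props[OF Ts] by auto
      show "0 < 4 * \<epsilon>" using eps by simp
      fix S :: "(point \<times> bool) list" and t assume S: "length S = mtest" and t: "t \<in> ?T"
      have "sample_error (tree_eval (best_tree n d H S) H) S \<le> sample_error (tree_eval t H) S"
        using best_tree_props[OF Ts] t by auto
      then show "sum_list (map (w (best_tree n d H S)) S) \<le> sum_list (map (w t) S)"
        unfolding sample_error_sum[OF S] w_def using k by (simp add: divide_le_cancel)
    qed
    have r: "ln (real (card ?T)) / (4 * \<epsilon> * real mtest) \<le> \<epsilon> / 4"
      using mt2 eps k by (simp add: field_simps power2_eq_square)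
    have ew: "measure_pmf.expectation P (w T) = error (tree_eval T H) P" for T
      unfolding w_def error_eq_exp ..
    show ?thesis using eps by (intro order.trans[OF E[unfolded ew]]) (use r in linarith)
  qed
qed

lemma set_labeled: "set_pmf (labeled D f) = (\<lambda>x. (x, f x)) ` set_pmf D"
  unfolding labeled_def by simp

lemma train_part:
  fixes Dstar :: "point pmf" and f :: hyp
  defines "P \<equiv> labeled Dstar f"
  assumes Ts: "dtree n d Ts"
    and supp: "set_pmf Dstar \<subseteq> cube n"
    and dec: "\<forall>l\<in>Ts. set_pmf Dstar \<inter> restr_set l \<noteq> {} \<longrightarrow> restrict_dist Dstar l \<in> \<D>"
    and uses: "uses_samples A m"
    and learn: "\<forall>D\<in>\<D>. learns C D A m \<epsilon>"
    and fC: "f \<in> C"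
    and eps: "\<epsilon> > 0"
    and mtr: "real mtrain \<ge> 2 ^ d * real m / \<epsilon>"
  shows "measure_pmf.expectation (replicate_pmf mtrain P) (\<lambda>Str.
           measure_pmf.expectation (Pi_pmf (depth_restrs n d) (\<lambda>_. False) (\<lambda>\<rho>. A (restrict_sample \<rho> Str)))
             (\<lambda>H. error (tree_eval Ts H) P)) \<le> 2 * \<epsilon>"
proof -
  define S where "S = (\<lambda>l. {z :: point \<times> bool. in_restr (fst z) l})"
  define ind where "ind = (\<lambda>l (h::hyp) (z :: point \<times> bool). if in_restr (fst z) l then (if h (fst z) \<noteq> snd z then 1 else (0::real)) else 0)"
  define a where "a = (\<lambda>l h. measure_pmf.expectation P (ind l h))"
  define p where "p = (\<lambda>l. measure_pmf.prob P (S l))"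
  define Pi where "Pi = (\<lambda>Str. Pi_pmf (depth_restrs n d) (\<lambda>_. False) (\<lambda>\<rho>. A (restrict_sample \<rho> Str)))"
  define N where "N = mtrain"
  have finTs: "finite Ts" and cardTs: "card Ts \<le> 2 ^ d" using dtree_leaves[OF Ts] by auto
  have ind01: "0 \<le> ind l h z \<and> ind l h z \<le> 1" for l h z by (auto simp: ind_def)
  have a01: "0 \<le> a l h \<and> a l h \<le> 1" for l h unfolding a_def by (rule exp_01) (use ind01 in auto)
  have E01: "0 \<le> measure_pmf.expectation Q (a l) \<and> measure_pmf.expectation Q (a l) \<le> 1" for Q l
    by (rule exp_01) (use a01 in auto)
  have intind: "integrable (measure_pmf Q) (ind l h)" for Q l h
    by (rule pmf_integrable_bounded[where B=1]) (use ind01 in \<open>auto simp: abs_le_iff\<close>)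
  have suppP: "length (fst z) = n \<and> snd z = f (fst z)" if "z \<in> set_pmf P" for z
    using that supp unfolding P_def set_labeled by (auto simp: cube_def)
  have err_dec: "error (tree_eval Ts H) P = (\<Sum>l\<in>Ts. a l (H l))" for H
  proof -
    have "(\<Sum>l\<in>Ts. a l (H l)) = measure_pmf.expectation P (\<lambda>z. \<Sum>l\<in>Ts. ind l (H l) z)"
      unfolding a_def by (rule Bochner_Integration.integral_sum[symmetric]) (use intind in auto)
    also have "\<dots> = measure_pmf.expectation P (\<lambda>z. if tree_eval Ts H (fst z) \<noteq> snd z then 1 else 0)"
    proof (intro integral_cong_AE)
      show "AE z in measure_pmf P. (\<Sum>l\<in>Ts. ind l (H l) z) = (if tree_eval Ts H (fst z) \<noteq> snd z then 1 else 0)"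
        unfolding AE_measure_pmf_iff
      proof
        fix z assume z: "z \<in> set_pmf P"
        have "(\<Sum>l\<in>Ts. ind l (H l) z) = (\<Sum>l\<in>Ts. if in_restr (fst z) l then (if H l (fst z) \<noteq> snd z then 1 else 0) else 0)"
          unfolding ind_def ..
        also have "\<dots> = (if H (THE l. l \<in> Ts \<and> in_restr (fst z) l) (fst z) \<noteq> snd z then 1 else 0)"
          by (rule leaf_sum[OF Ts, of "fst z" "\<lambda>l. if H l (fst z) \<noteq> snd z then 1 else 0"]) (use suppP[OF z] in auto)
        finally show "(\<Sum>l\<in>Ts. ind l (H l) z) = (if tree_eval Ts H (fst z) \<noteq> snd z then 1 else 0)"
          unfolding tree_eval_def .
      qed
    qed auto
    finally show ?thesis unfolding error_eq_exp by simp
  qed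
  have sum_p: "(\<Sum>l\<in>Ts. p l) \<le> 1"
  proof -
    have "(\<Sum>l\<in>Ts. p l) = (\<Sum>l\<in>Ts. measure_pmf.expectation P (indicator (S l)))" unfolding p_def by simp
    also have "\<dots> = measure_pmf.expectation P (\<lambda>z. \<Sum>l\<in>Ts. indicator (S l) z)"
      by (rule Bochner_Integration.integral_sum[symmetric])
         (auto intro!: pmf_integrable_bounded[where B=1] simp: indicator_def)
    also have "\<dots> = measure_pmf.expectation P (\<lambda>z. 1)"
    proof (intro integral_cong_AE)
      show "AE z in measure_pmf P. (\<Sum>l\<in>Ts. indicator (S l) z) = (1::real)"
        unfolding AE_measure_pmf_iff
      proof
        fix z assume z: "z \<in> set_pmf P"
        have "(\<Sum>l\<in>Ts. indicator (S l) z) = (\<Sum>l\<in>Ts. if in_restr (fst z) l then 1 else (0::real))"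
          by (intro sum.cong refl) (auto simp: S_def indicator_def)
        also have "\<dots> = 1"
          by (rule leaf_sum[OF Ts, of "fst z" "\<lambda>_. 1"]) (use suppP[OF z] in auto)
        finally show "(\<Sum>l\<in>Ts. indicator (S l) z) = (1::real)" .
      qed
    qed auto
    finally show ?thesis by simp
  qed
  have leaf: "measure_pmf.expectation (replicate_pmf N P)
                (\<lambda>Str. measure_pmf.expectation (A (restrict_sample l Str)) (a l))
              \<le> p l * \<epsilon> + real m / real (N + 1)" if l: "l \<in> Ts" for l
  proof (cases "set_pmf Dstar \<inter> restr_set l = {}")
    case True
    have "a l h = 0" for h
    proof -
      have "a l h = measure_pmf.expectation P (\<lambda>_. 0)"
        unfolding a_def
      proof (intro integral_cong_AE)
        show "AE z in measure_pmf P. ind l h z = 0" unfolding AE_measure_pmf_iff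
        proof
          fix z assume z: "z \<in> set_pmf P"
          then obtain x where "z = (x, f x)" "x \<in> set_pmf Dstar" unfolding P_def set_labeled by auto
          then have "\<not> in_restr (fst z) l" using True by (auto simp: restr_set_def)
          then show "ind l h z = 0" unfolding ind_def by simp
        qed
      qed auto
      then show ?thesis by simp
    qed
    then have "a l = (\<lambda>_. 0)" by auto
    moreover have "0 \<le> p l" unfolding p_def by simp
    ultimately show ?thesis using eps by simp
  next
    case False
    define Dl where "Dl = restrict_dist Dstar l"
    have DlD: "Dl \<in> \<D>" using dec l False unfolding Dl_def by auto
    have vim: "(\<lambda>x. (x, f x)) -` S l = restr_set l" by (auto simp: S_def restr_set_def)
    have neP: "set_pmf P \<inter> S l \<noteq> {}" using False unfolding P_def set_labeled by (auto simp: S_def restr_set_def)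
    have condP: "cond_pmf P (S l) = labeled Dl f"
      unfolding P_def labeled_def Dl_def restrict_dist_def
      by (subst cond_map_pmf) (use False vim in auto)
    have ppos: "p l > 0" unfolding p_def using neP
      by (simp add: measure_measure_pmf_not_zero zero_less_measure_iff)
    have a_eq: "a l h = p l * error h (cond_pmf P (S l))" for h
    proof -
      have "a l h = measure_pmf.prob P {z. in_restr (fst z) l \<and> h (fst z) \<noteq> snd z}"
      proof -
        have "ind l h = indicator {z. in_restr (fst z) l \<and> h (fst z) \<noteq> snd z}"
          by (auto simp: ind_def indicator_def fun_eq_iff)
        then show ?thesis unfolding a_def by simp
      qed
      also have "{z. in_restr (fst z) l \<and> h (fst z) \<noteq> snd z} = S l \<inter> {(x, y). h x \<noteq> y}"
        by (auto simp: S_def)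
      also have "measure_pmf.prob P \<dots> = p l * measure_pmf.prob (cond_pmf P (S l)) {(x, y). h x \<noteq> y}"
        using measure_cond_pmf[OF neP, of "{(x, y). h x \<noteq> y}"] ppos unfolding p_def by simp
      finally show ?thesis unfolding error_def .
    qed
    have rs: "restrict_sample l Str = filter (\<lambda>z. z \<in> S l) Str" for Str
      unfolding restrict_sample_def S_def by (intro filter_cong refl) auto
    have LB: "measure_pmf.expectation (replicate_pmf N P)
           (\<lambda>xs. measure_pmf.expectation (A (filter (\<lambda>z. z \<in> S l) xs)) (\<lambda>h. error h (cond_pmf P (S l))))
         \<le> \<epsilon> + measure_pmf.prob (map_pmf (\<lambda>xs. length (filter (\<lambda>z. z \<in> S l) xs)) (replicate_pmf N P)) {..<m}"
    proof (rule leaf_bound[OF neP])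
      show "\<And>h. 0 \<le> error h (cond_pmf P (S l)) \<and> error h (cond_pmf P (S l)) \<le> 1" by (rule error01)
      show "\<And>xs. m \<le> length xs \<Longrightarrow> A xs = A (take m xs)" using uses unfolding uses_samples_def by blast
      show "measure_pmf.expectation (replicate_pmf m (cond_pmf P (S l)) \<bind> A) (\<lambda>h. error h (cond_pmf P (S l))) \<le> \<epsilon>"
        using learn DlD fC unfolding condP learns_def by auto
    qed
    have CB: "p l * measure_pmf.prob (map_pmf (\<lambda>xs. length (filter (\<lambda>z. z \<in> S l) xs)) (replicate_pmf N P)) {..<m}
              \<le> real m / real (N + 1)"
      unfolding p_def by (rule count_tail_bound)
    have "measure_pmf.expectation (replicate_pmf N P)
                (\<lambda>Str. measure_pmf.expectation (A (restrict_sample l Str)) (a l))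
          = measure_pmf.expectation (replicate_pmf N P)
                (\<lambda>Str. p l * measure_pmf.expectation (A (filter (\<lambda>z. z \<in> S l) Str)) (\<lambda>h. error h (cond_pmf P (S l))))"
      unfolding rs a_eq by simp
    also have "\<dots> = p l * measure_pmf.expectation (replicate_pmf N P)
                (\<lambda>Str. measure_pmf.expectation (A (filter (\<lambda>z. z \<in> S l) Str)) (\<lambda>h. error h (cond_pmf P (S l))))"
      by simp
    also have "\<dots> \<le> p l * (\<epsilon> + measure_pmf.prob (map_pmf (\<lambda>xs. length (filter (\<lambda>z. z \<in> S l) xs)) (replicate_pmf N P)) {..<m})"
      using LB ppos by (intro mult_left_mono) auto
    also have "\<dots> \<le> p l * \<epsilon> + real m / real (N + 1)"
      using CB by (simp add: algebra_simps)
    finally show ?thesis .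
  qed
  have inner: "measure_pmf.expectation (Pi Str) (\<lambda>H. error (tree_eval Ts H) P) =
               (\<Sum>l\<in>Ts. measure_pmf.expectation (A (restrict_sample l Str)) (a l))" for Str
  proof -
    have "measure_pmf.expectation (Pi Str) (\<lambda>H. error (tree_eval Ts H) P) =
          measure_pmf.expectation (Pi Str) (\<lambda>H. \<Sum>l\<in>Ts. a l (H l))"
      unfolding err_dec ..
    also have "\<dots> = (\<Sum>l\<in>Ts. measure_pmf.expectation (Pi Str) (\<lambda>H. a l (H l)))"
      by (rule Bochner_Integration.integral_sum)
         (use a01 in \<open>auto intro!: pmf_integrable_bounded[where B=1] simp: abs_le_iff\<close>)
    also have "\<dots> = (\<Sum>l\<in>Ts. measure_pmf.expectation (A (restrict_sample l Str)) (a l))"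
    proof (intro sum.cong refl)
      fix l assume l: "l \<in> Ts"
      have "measure_pmf.expectation (Pi Str) (\<lambda>H. a l (H l)) =
            measure_pmf.expectation (map_pmf (\<lambda>H. H l) (Pi Str)) (a l)" by simp
      also have "map_pmf (\<lambda>H. H l) (Pi Str) = A (restrict_sample l Str)"
        unfolding Pi_def using leaf_in_depth_restrs[OF Ts l]
        by (subst Pi_pmf_component) (auto simp: finite_depth_restrs)
      finally show "measure_pmf.expectation (Pi Str) (\<lambda>H. a l (H l)) =
                    measure_pmf.expectation (A (restrict_sample l Str)) (a l)" .
    qed
    finally show ?thesis .
  qed
  have "measure_pmf.expectation (replicate_pmf N P) (\<lambda>Str. measure_pmf.expectation (Pi Str) (\<lambda>H. error (tree_eval Ts H) P))
        = (\<Sum>l\<in>Ts. measure_pmf.expectation (replicate_pmf N P) (\<lambda>Str. measure_pmf.expectation (A (restrict_sample l Str)) (a l)))"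
    unfolding inner
    by (rule Bochner_Integration.integral_sum)
       (use E01 in \<open>auto intro!: pmf_integrable_bounded[where B=1] simp: abs_le_iff\<close>)
  also have "\<dots> \<le> (\<Sum>l\<in>Ts. p l * \<epsilon> + real m / real (N + 1))"
    by (rule sum_mono) (rule leaf)
  also have "\<dots> = \<epsilon> * (\<Sum>l\<in>Ts. p l) + real (card Ts) * (real m / real (N + 1))"
    by (simp add: sum.distrib sum_distrib_left mult.commute)
  also have "\<dots> \<le> \<epsilon> * 1 + 2 ^ d * (real m / real (N + 1))"
  proof -
    have c: "real (card Ts) \<le> 2 ^ d" using cardTs by (metis of_nat_le_iff of_nat_numeral of_nat_power)
    show ?thesis
      using sum_p eps c by (intro add_mono mult_left_mono mult_right_mono) auto
  qed
  also have "2 ^ d * (real m / real (N + 1)) \<le> \<epsilon>"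
  proof -
    have "2 ^ d * real m \<le> \<epsilon> * real N" using mtr eps unfolding N_def by (simp add: field_simps)
    also have "\<dots> \<le> \<epsilon> * real (N + 1)" using eps by simp
    finally show ?thesis by (simp add: field_simps)
  qed
  finally show ?thesis unfolding Pi_def N_def by simp
qed

lemma main_bound:
  assumes supp: "set_pmf Dstar \<subseteq> cube n"
    and hd: "has_decomposition n \<D> Dstar d"
    and uses: "uses_samples A m"
    and learn: "\<forall>D\<in>\<D>. learns C D A m \<epsilon>"
    and eps: "\<epsilon> > 0" and fC: "f \<in> C"
    and mtr: "real mtrain \<ge> 2 ^ d * real m / \<epsilon>"
    and mt: "real mtest \<ge> 2 ^ d * ln (real n) / \<epsilon> ^ 2"
  shows "measure_pmf.expectation
           (replicate_pmf mtrain (labeled Dstar f) \<bind> (\<lambda>Strain.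
            replicate_pmf mtest (labeled Dstar f) \<bind> (\<lambda>Stest.
            tree_learn n A Strain Stest d)))
           (\<lambda>H. error H (labeled Dstar f)) \<le> 4 * \<epsilon>"
proof -
  obtain Ts where Ts: "dtree n d Ts"
    and dec: "\<forall>l\<in>Ts. set_pmf Dstar \<inter> restr_set l \<noteq> {} \<longrightarrow> restrict_dist Dstar l \<in> \<D>"
    using hd unfolding has_decomposition_def by blast
  define P where "P = labeled Dstar f"
  define Pi where "Pi = (\<lambda>Str. Pi_pmf (depth_restrs n d) (\<lambda>_. False) (\<lambda>\<rho>. A (restrict_sample \<rho> Str)))"
  define inner where "inner = (\<lambda>H. measure_pmf.expectation (replicate_pmf mtest P)
                                  (\<lambda>Ste. error (tree_eval (best_tree n d H Ste) H) P))"
  have e1: "\<bar>error h Q\<bar> \<le> 1" for h Q using error01[of h Q] by auto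
  have step1: "measure_pmf.expectation (replicate_pmf mtest P \<bind> (\<lambda>Ste. tree_learn n A Str Ste d)) (\<lambda>H. error H P)
             = measure_pmf.expectation (Pi Str) inner" for Str
  proof -
    have "replicate_pmf mtest P \<bind> (\<lambda>Ste. tree_learn n A Str Ste d) =
          Pi Str \<bind> (\<lambda>H. map_pmf (\<lambda>Ste. tree_eval (best_tree n d H Ste) H) (replicate_pmf mtest P))"
      unfolding tree_learn_def Pi_def map_pmf_def by (rule bind_commute_pmf)
    then have "measure_pmf.expectation (replicate_pmf mtest P \<bind> (\<lambda>Ste. tree_learn n A Str Ste d)) (\<lambda>H. error H P)
        = measure_pmf.expectation (Pi Str) (\<lambda>H. measure_pmf.expectation
            (map_pmf (\<lambda>Ste. tree_eval (best_tree n d H Ste) H) (replicate_pmf mtest P)) (\<lambda>H. error H P))"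
      by (simp only:) (rule exp_bind_pmf[where B=1], rule e1)
    then show ?thesis unfolding inner_def by simp
  qed
  have inner01: "0 \<le> inner H \<and> inner H \<le> 1" for H
    unfolding inner_def by (rule exp_01) (rule error01)
  have Ein01: "0 \<le> measure_pmf.expectation (Pi Str) inner \<and> measure_pmf.expectation (Pi Str) inner \<le> 1" for Str
    by (rule exp_01) (rule inner01)
  have ET01: "0 \<le> measure_pmf.expectation (Pi Str) (\<lambda>H. error (tree_eval Ts H) P) \<and>
              measure_pmf.expectation (Pi Str) (\<lambda>H. error (tree_eval Ts H) P) \<le> 1" for Str
    by (rule exp_01) (rule error01)
  have inner_le: "inner H \<le> error (tree_eval Ts H) P + \<epsilon>" for H
    unfolding inner_def by (rule test_part[OF Ts eps mt])
  have step2: "measure_pmf.expectation (Pi Str) inner \<le>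
               measure_pmf.expectation (Pi Str) (\<lambda>H. error (tree_eval Ts H) P) + \<epsilon>" for Str
  proof -
    have "measure_pmf.expectation (Pi Str) inner \<le>
          measure_pmf.expectation (Pi Str) (\<lambda>H. error (tree_eval Ts H) P + \<epsilon>)"
    proof (rule integral_mono)
      show "integrable (measure_pmf (Pi Str)) inner"
        by (rule pmf_integrable_bounded[where B=1])
           (use inner01 in \<open>auto simp: abs_le_iff\<close>)
      show "integrable (measure_pmf (Pi Str)) (\<lambda>H. error (tree_eval Ts H) P + \<epsilon>)"
        by (rule pmf_integrable_bounded[where B="1 + \<epsilon>"]) (use error01 eps in \<open>auto simp: abs_le_iff\<close>)
    qed (rule inner_le)
    also have "\<dots> = measure_pmf.expectation (Pi Str) (\<lambda>H. error (tree_eval Ts H) P) + \<epsilon>"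
      by (subst Bochner_Integration.integral_add)
         (auto intro!: pmf_integrable_bounded[where B=1] simp: e1 measure_pmf.prob_space)
    finally show ?thesis .
  qed
  have T: "measure_pmf.expectation (replicate_pmf mtrain P) (\<lambda>Str.
           measure_pmf.expectation (Pi Str) (\<lambda>H. error (tree_eval Ts H) P)) \<le> 2 * \<epsilon>"
    unfolding Pi_def P_def by (rule train_part[OF Ts supp dec uses learn fC eps mtr])
  have "measure_pmf.expectation
           (replicate_pmf mtrain P \<bind> (\<lambda>Str. replicate_pmf mtest P \<bind> (\<lambda>Ste. tree_learn n A Str Ste d)))
           (\<lambda>H. error H P)
        = measure_pmf.expectation (replicate_pmf mtrain P) (\<lambda>Str. measure_pmf.expectation (Pi Str) inner)"
    by (subst exp_bind_pmf[where B=1]) (auto simp: e1 step1)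
  also have "\<dots> \<le> measure_pmf.expectation (replicate_pmf mtrain P)
                  (\<lambda>Str. measure_pmf.expectation (Pi Str) (\<lambda>H. error (tree_eval Ts H) P) + \<epsilon>)"
  proof (rule integral_mono)
    show "integrable (measure_pmf (replicate_pmf mtrain P)) (\<lambda>Str. measure_pmf.expectation (Pi Str) inner)"
      by (rule pmf_integrable_bounded[where B=1])
         (use Ein01 in \<open>auto simp: abs_le_iff\<close>)
    show "integrable (measure_pmf (replicate_pmf mtrain P))
            (\<lambda>Str. measure_pmf.expectation (Pi Str) (\<lambda>H. error (tree_eval Ts H) P) + \<epsilon>)"
      by (rule pmf_integrable_bounded[where B="1 + \<epsilon>"]) (use ET01 eps in \<open>auto simp: abs_le_iff\<close>)
  qed (rule step2)
  also have "\<dots> = measure_pmf.expectation (replicate_pmf mtrain P)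
                  (\<lambda>Str. measure_pmf.expectation (Pi Str) (\<lambda>H. error (tree_eval Ts H) P)) + \<epsilon>"
    by (subst Bochner_Integration.integral_add)
       (use ET01 in \<open>auto intro!: pmf_integrable_bounded[where B=1] simp: abs_le_iff measure_pmf.prob_space\<close>)
  also have "\<dots> \<le> 4 * \<epsilon>" using T eps by linarith
  finally show ?thesis unfolding P_def .
qed

theorem lemma6p4:
  "\<exists>c1>0. \<exists>c2>0. \<forall>(n::nat) (C::hyp set) (\<D>::point pmf set) (Dstar::point pmf) (d::nat)
      (A::learner) (m::nat) (\<epsilon>::real) (f::hyp) (mtrain::nat) (mtest::nat).
     (\<forall>D\<in>\<D>. set_pmf D \<subseteq> cube n) \<and> closed_under_restrictions n \<D> \<and>
     set_pmf Dstar \<subseteq> cube n \<and> has_decomposition n \<D> Dstar d \<and>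
     uses_samples A m \<and> (\<forall>D\<in>\<D>. learns C D A m \<epsilon>) \<and> \<epsilon> > 0 \<and> f \<in> C \<and>
     real mtrain \<ge> c1 * 2 ^ d * real m / \<epsilon> \<and>
     real mtest \<ge> c2 * 2 ^ d * ln (real n) / \<epsilon> ^ 2
     \<longrightarrow> measure_pmf.expectation
           (replicate_pmf mtrain (labeled Dstar f) \<bind> (\<lambda>Strain.
            replicate_pmf mtest (labeled Dstar f) \<bind> (\<lambda>Stest.
            tree_learn n A Strain Stest d)))
           (\<lambda>H. error H (labeled Dstar f)) \<le> 4 * \<epsilon>"
  apply (rule exI[of _ 1], simp only: zero_less_one simp_thms)
  apply (rule exI[of _ 1], simp only: zero_less_one simp_thms mult_1)
  apply (intro allI impI)
  apply (elim conjE)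
  apply (rule main_bound)
          apply assumption+
  done

end
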